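(* Consider the model in the context, let $0<\alpha<1$, and assume: (i) for every $0<x\le 1$, $\lim_{n\to\infty}P^S_{1,n}(x)=1$ and $\lim_{n\to\infty}P_{1,n}(x)=1$, and $P_{1,n}(x)$ is weakly increasing in $n$ for every $0\le x\le1$; (ii) with $S_m=S\cap\{1,\ldots,m\}$, $|S_m|/m\to c$ in probability as $m\to\infty$ for some constant $c>0$. Then \[ \operatorname*{plim}_{(m,n)\to\infty} q_{\alpha,m,n}(S_m)=\gamma_S, \] i.e. $q_{\alpha,m,n}(S_m)\to\gamma_S$ in probability as $m$ and $n$ tend to infinity jointly (at arbitrary relative rates).
   Context: Model: infinitely many hypotheses indexed by $i\in\mathbb{N}$, a (random) index set $T\subseteq\mathbb{N}$ of true null hypotheses and a (random) infinite subset of interest $S\subseteq\mathbb{N}$. For each sample size $n$, the $p$-values $p_{1,n},p_{2,n},\ldots$ are independent with marginal distribution $P_n(x)=\gamma x+(1-\gamma)P_{1,n}(x)$, $0\le x\le 1$, where $\gamma$ is the proportion of true nulls and $P_{1,n}(x)\ge x$ is a distribution function; conditionally on $i\in S$, $p_{i,n}$ independently has distribution $P^S_n(x)=\gamma_S x+(1-\gamma_S)P^S_{1,n}(x)$ with $\gamma_S\in[0,1]$ the proportion of true nulls within $S$ and $P^S_{1,n}(x)\ge x$ a distribution function; these distributions depend on $n$ but not on $m$. For given $m,n$, using $p_{1,n},\ldots,p_{m,n}$: for $I\subseteq\{1,\ldots,m\}$, $p_{(i:I)}$ is the $i$-th smallest of $\{p_{j,n}:j\in I\}$; Simes test: $I\in\mathcal{U}$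 iff some $1\le i\le|I|$ has $|I|p_{(i:I)}\le i\alpha$; closed testing $\mathcal{X}=\{I: J\in\mathcal{U}\ \forall J\supseteq I, J\subseteq\{1,\ldots,m\}\}$; $t_{\alpha,m,n}(A)=\max\{|I|:I\subseteq A, I\notin\mathcal{X}\}$; $q_{\alpha,m,n}(A)=t_{\alpha,m,n}(A)/|A|$ for $A\neq\emptyset$ and $0$ for $A=\emptyset$. *)

theory Defs
  imports "HOL-Probability.Probability"
begin

text \<open>p-values of a fixed sample size and outcome are given as a vector pv :: nat => real,
  hypotheses are indexed by positive naturals 1, 2, ...\<close>

definition ord_stat :: "(nat \<Rightarrow> real) \<Rightarrow> nat set \<Rightarrow> nat \<Rightarrow> real" where
  "ord_stat pv I i = sort (map pv (sorted_list_of_set I)) ! (i - 1)"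

definition simes_rej :: "real \<Rightarrow> (nat \<Rightarrow> real) \<Rightarrow> nat set \<Rightarrow> bool" where
  "simes_rej \<alpha> pv I \<longleftrightarrow>
     (\<exists>i\<in>{1..card I}. real (card I) * ord_stat pv I i \<le> real i * \<alpha>)"

definition closed_rej :: "real \<Rightarrow> nat \<Rightarrow> (nat \<Rightarrow> real) \<Rightarrow> nat set \<Rightarrow> bool" where
  "closed_rej \<alpha> m pv I \<longleftrightarrow>
     I \<subseteq> {1..m} \<and> (\<forall>J. I \<subseteq> J \<and> J \<subseteq> {1..m} \<longrightarrow> simes_rej \<alpha> pv J)"

definition t_stat :: "real \<Rightarrow> nat \<Rightarrow> (nat \<Rightarrow> real) \<Rightarrow> nat set \<Rightarrow> nat" where
  "t_stat \<alpha> m pv A = Max (card ` {I. I \<subseteq> A \<and> \<not> closed_rej \<alpha> m pv I})"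

definition q_stat :: "real \<Rightarrow> nat \<Rightarrow> (nat \<Rightarrow> real) \<Rightarrow> nat set \<Rightarrow> real" where
  "q_stat \<alpha> m pv A = (if A = {} then 0 else real (t_stat \<alpha> m pv A) / real (card A))"

definition dist_fun_01 :: "(real \<Rightarrow> real) \<Rightarrow> bool" where
  "dist_fun_01 F \<longleftrightarrow> mono_on {0..1} F \<and> (\<forall>x\<in>{0..1}. 0 \<le> F x) \<and> F 1 = 1 \<and>
     (\<forall>x\<in>{0..<1}. continuous (at x within {x..1}) F)"

end

theory Submission
  imports Defs
begin


lemma sorted_nth_le_iff:
  fixes xs :: "real list"
  assumes "sorted xs" "k < length xs"
  shows "xs ! k \<le> y \<longleftrightarrow> k < length (filter (\<lambda>v. v \<le> y) xs)"
proof
  assume h: "xs ! k \<le> y"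
  have "{0..k} \<subseteq> {i. i < length xs \<and> xs ! i \<le> y}"
    using assms h by (auto intro: order_trans[OF sorted_nth_mono[OF assms(1)]])
  hence "card {0..k} \<le> card {i. i < length xs \<and> xs ! i \<le> y}"
    by (intro card_mono) auto
  thus "k < length (filter (\<lambda>v. v \<le> y) xs)" by (simp add: length_filter_conv_card)
next
  assume h: "k < length (filter (\<lambda>v. v \<le> y) xs)"
  show "xs ! k \<le> y"
  proof (rule ccontr)
    assume "\<not> xs ! k \<le> y"
    hence "{i. i < length xs \<and> xs ! i \<le> y} \<subseteq> {0..<k}"
      using assms by (auto simp: not_le) (metis le_less_trans not_le sorted_nth_mono)
    hence "card {i. i < length xs \<and> xs ! i \<le> y} \<le> k"
      by (metis card_atLeastLessThan card_mono finite_atLeastLessThan minus_nat.diff_0)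
    thus False using h by (simp add: length_filter_conv_card)
  qed
qed

lemma ord_stat_le_iff:
  assumes "finite J" "1 \<le> i" "i \<le> card J"
  shows "ord_stat pv J i \<le> y \<longleftrightarrow> i \<le> card {j\<in>J. pv j \<le> y}"
proof -
  define xs where "xs = sort (map pv (sorted_list_of_set J))"
  have s: "sorted xs" and l: "length xs = card J" using assms by (auto simp: xs_def)
  have "length (filter (\<lambda>v. v \<le> y) xs) = size (filter_mset (\<lambda>v. v \<le> y) (mset xs))"
    by (metis mset_filter size_mset)
  also have "\<dots> = size (filter_mset (\<lambda>v. v \<le> y) (mset (map pv (sorted_list_of_set J))))"
    by (simp add: xs_def)
  also have "\<dots> = length (filter (\<lambda>v. v \<le> y) (map pv (sorted_list_of_set J)))"
    by (metis mset_filter size_mset)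
  also have "\<dots> = length (filter (\<lambda>j. pv j \<le> y) (sorted_list_of_set J))"
    by (simp add: filter_map comp_def)
  also have "\<dots> = card {j\<in>J. pv j \<le> y}"
    using assms by (subst distinct_length_filter) (auto intro: arg_cong[where f=card])
  finally have c: "length (filter (\<lambda>v. v \<le> y) xs) = card {j\<in>J. pv j \<le> y}" .
  have "ord_stat pv J i = xs ! (i - 1)" by (simp add: ord_stat_def xs_def)
  moreover have "i - 1 < length xs" using assms l by simp
  ultimately show ?thesis using sorted_nth_le_iff[OF s, of "i - 1" y] c assms by auto
qed



lemma simes_rejI:
  assumes "finite J" "1 \<le> card {j\<in>J. pv j \<le> x}"
    "real (card J) * x \<le> real (card {j\<in>J. pv j \<le> x}) * \<alpha>"
  shows "simes_rej \<alpha> pv J"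
proof -
  let ?N = "card {j\<in>J. pv j \<le> x}"
  have N: "?N \<le> card J" using assms by (intro card_mono) auto
  have o: "ord_stat pv J ?N \<le> x" using ord_stat_le_iff[OF assms(1) assms(2) N] by simp
  have "real (card J) * ord_stat pv J ?N \<le> real (card J) * x"
    using o by (intro mult_left_mono) auto
  also have "\<dots> \<le> real ?N * \<alpha>" by (rule assms(3))
  finally show ?thesis unfolding simes_rej_def using N assms(2) by auto
qed

lemma simes_not_rejI:
  assumes "finite J" "0 < \<alpha>"
    "\<And>y. 0 < y \<Longrightarrow> y \<le> \<alpha> \<Longrightarrow> real (card {j\<in>J. pv j \<le> y}) < y * real (card J) / \<alpha>"
  shows "\<not> simes_rej \<alpha> pv J"
proof
  assume "simes_rej \<alpha> pv J"
  then obtain i where i: "i \<in> {1..card J}" "real (card J) * ord_stat pv J i \<le> real i * \<alpha>"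
    unfolding simes_rej_def by auto
  have cJ: "0 < real (card J)" using i by auto
  define y where "y = real i * \<alpha> / real (card J)"
  have "ord_stat pv J i \<le> y" using i cJ by (simp add: y_def field_simps)
  hence le: "i \<le> card {j\<in>J. pv j \<le> y}" using ord_stat_le_iff[OF assms(1)] i by auto
  have "0 < y" using i cJ assms(2) by (simp add: y_def)
  moreover have "y \<le> \<alpha>" using i cJ assms(2) by (simp add: y_def field_simps)
  ultimately have "real (card {j\<in>J. pv j \<le> y}) < y * real (card J) / \<alpha>" by (rule assms(3))
  also have "\<dots> = real i" using cJ assms(2) by (simp add: y_def)
  finally show False using le by simp
qed

lemma fin_C:
  assumes "finite A"
  shows "finite {I. I \<subseteq> A \<and> \<not> closed_rej \<alpha> m pv I}"
proof (rule finite_subset[of _ "Pow A"])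
  show "{I. I \<subseteq> A \<and> \<not> closed_rej \<alpha> m pv I} \<subseteq> Pow A" by blast
qed (use assms in simp)
lemma empty_not_closed: "\<not> closed_rej \<alpha> m pv {}"
proof -
  have "\<not> simes_rej \<alpha> pv {}" by (simp add: simes_rej_def)
  thus "\<not> closed_rej \<alpha> m pv {}" unfolding closed_rej_def by (metis empty_subsetI)
qed

lemma t_stat_le:
  assumes "finite A" "\<And>I. I \<subseteq> A \<Longrightarrow> real (card I) > b \<Longrightarrow> closed_rej \<alpha> m pv I"
  shows "real (t_stat \<alpha> m pv A) \<le> b"
proof -
  let ?C = "{I. I \<subseteq> A \<and> \<not> closed_rej \<alpha> m pv I}"
  have "{} \<in> ?C" using empty_not_closed by blast
  moreover have "finite ?C" using assms(1) by (rule fin_C)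
  ultimately have "t_stat \<alpha> m pv A \<in> card ` ?C" unfolding t_stat_def
    by (intro Max_in) auto
  then obtain I where "I \<subseteq> A" "\<not> closed_rej \<alpha> m pv I" "t_stat \<alpha> m pv A = card I" by blast
  thus ?thesis using assms(2) not_less by metis
qed

lemma t_stat_ge:
  assumes "finite A" "J \<subseteq> A" "J \<subseteq> {1..m}" "\<not> simes_rej \<alpha> pv J"
  shows "card J \<le> t_stat \<alpha> m pv A"
proof -
  let ?C = "{I. I \<subseteq> A \<and> \<not> closed_rej \<alpha> m pv I}"
  have f: "finite ?C" using assms(1) by (rule fin_C)
  have "\<not> closed_rej \<alpha> m pv J" using assms unfolding closed_rej_def by blast
  hence "J \<in> ?C" using assms by blast
  hence "card J \<in> card ` ?C" by blast
  thus ?thesis unfolding t_stat_def using f by (intro Max_ge) auto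
qed



lemma sum_ind_real: "finite A \<Longrightarrow> (\<Sum>x\<in>A. (indicator B x :: real)) = real (card (A \<inter> B))"
  unfolding indicator_def by (simp add: sum.If_cases Int_def)

locale cx = prob_space M for M :: "'a measure" +
  fixes p :: "nat \<Rightarrow> 'a \<Rightarrow> real" and S :: "'a \<Rightarrow> nat set" and G :: "real \<Rightarrow> real"
  assumes p_rv: "\<And>i. 1 \<le> i \<Longrightarrow> p i \<in> borel_measurable M"
  and p_range: "\<And>i \<omega>. 1 \<le> i \<Longrightarrow> \<omega> \<in> space M \<Longrightarrow> p i \<omega> \<in> {0..1}"
  and S_meas: "\<And>i. {\<omega> \<in> space M. i \<in> S \<omega>} \<in> sets M"
  and condS: "\<And>I x. finite I \<Longrightarrow> I \<subseteq> {1..} \<Longrightarrow> (\<forall>i\<in>I. x i \<in> {0..1}) \<Longrightarrow>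
        measure M {\<omega> \<in> space M. I \<subseteq> S \<omega> \<and> (\<forall>i\<in>I. p i \<omega> \<le> x i)}
        = measure M {\<omega> \<in> space M. I \<subseteq> S \<omega>} * (\<Prod>i\<in>I. G (x i))"
  and G01: "\<And>x. x \<in> {0..1} \<Longrightarrow> 0 \<le> G x \<and> G x \<le> 1"
  and G1: "G 1 = 1"
begin

definition "Aset i = {\<omega>\<in>space M. i \<in> S \<omega>}"
definition "Bset x i = {\<omega>\<in>space M. i \<in> S \<omega> \<and> p i \<omega> \<le> x}"
definition "Y x i \<omega> = indicator (Bset x i) \<omega> - G x * indicator (Aset i) \<omega>"
definition "D x m \<omega> = (\<Sum>i\<in>{1..m}. Y x i \<omega>)"

lemma Aset_sets: "Aset i \<in> sets M" using S_meas by (simp add: Aset_def)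

lemma Bset_sets: assumes "1 \<le> i" shows "Bset x i \<in> sets M"
proof -
  have [measurable]: "p i \<in> borel_measurable M" using p_rv assms .
  have "{\<omega>\<in>space M. p i \<omega> \<le> x} \<in> sets M" by measurable
  moreover have "Bset x i = Aset i \<inter> {\<omega>\<in>space M. p i \<omega> \<le> x}"
    by (auto simp: Bset_def Aset_def)
  ultimately show ?thesis using Aset_sets by auto
qed

lemma Bset_sub: "Bset x i \<subseteq> Aset i" by (auto simp: Bset_def Aset_def)

lemma Y_meas: "1 \<le> i \<Longrightarrow> Y x i \<in> borel_measurable M"
  unfolding Y_def[abs_def]
  by (intro borel_measurable_diff borel_measurable_times borel_measurable_const
      borel_measurable_indicator Bset_sets Aset_sets)

lemma Y_bound: assumes "x \<in> {0..1}" shows "\<bar>Y x i \<omega>\<bar> \<le> 1"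
  using G01[OF assms] Bset_sub[of x i]
  by (auto simp: Y_def indicator_def)

lemma YY_int: assumes "1 \<le> i" "1 \<le> j" "x \<in> {0..1}"
  shows "integrable M (\<lambda>\<omega>. Y x i \<omega> * Y x j \<omega>)"
proof (rule integrable_const_bound[where B=1])
  show "AE \<omega> in M. norm (Y x i \<omega> * Y x j \<omega>) \<le> 1"
    using Y_bound[OF assms(3)] by (auto simp: abs_mult intro!: mult_le_one)
  show "(\<lambda>\<omega>. Y x i \<omega> * Y x j \<omega>) \<in> borel_measurable M"
    using Y_meas assms by (intro borel_measurable_times) auto
qed

lemma YY_le: assumes "x \<in> {0..1}" shows "Y x i \<omega> * Y x j \<omega> \<le> 1"
proof -
  have "\<bar>Y x i \<omega> * Y x j \<omega>\<bar> \<le> 1" unfolding abs_mult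
    using Y_bound[OF assms] by (intro mult_le_one) auto
  thus ?thesis by linarith
qed

lemma EYY_diag: assumes "1 \<le> i" "x \<in> {0..1}"
  shows "integral\<^sup>L M (\<lambda>\<omega>. Y x i \<omega> * Y x i \<omega>) \<le> 1"
proof -
  have "integral\<^sup>L M (\<lambda>\<omega>. Y x i \<omega> * Y x i \<omega>) \<le> integral\<^sup>L M (\<lambda>\<omega>. 1)"
    by (rule integral_mono[OF YY_int[OF assms(1) assms(1) assms(2)]]) (auto intro: YY_le[OF assms(2)])
  thus ?thesis using prob_space by simp
qed

lemma meas_pair:
  assumes ij: "1 \<le> i" "1 \<le> j" "i \<noteq> j" and x: "x \<in> {0..1}" "y \<in> {0..1}"
  shows "measure M (Bset x i \<inter> Bset y j) = measure M (Aset i \<inter> Aset j) * (G x * G y)"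
proof -
  define xf where "xf = (\<lambda>k. if k = i then x else y)"
  have "Bset x i \<inter> Bset y j = {\<omega> \<in> space M. {i,j} \<subseteq> S \<omega> \<and> (\<forall>k\<in>{i,j}. p k \<omega> \<le> xf k)}"
    using ij by (auto simp: Bset_def xf_def)
  moreover have "Aset i \<inter> Aset j = {\<omega> \<in> space M. {i,j} \<subseteq> S \<omega>}"
    by (auto simp: Aset_def)
  moreover have "(\<Prod>k\<in>{i,j}. G (xf k)) = G x * G y" using ij by (simp add: xf_def)
  ultimately show ?thesis using condS[of "{i,j}" xf] ij x by (simp add: xf_def)
qed

lemma Bset_one: assumes "1 \<le> i" shows "Bset 1 i = Aset i"
  using p_range[OF assms] by (auto simp: Bset_def Aset_def)

lemma EYY_off: assumes ij: "1 \<le> i" "1 \<le> j" "i \<noteq> j" and x: "x \<in> {0..1}"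
  shows "integral\<^sup>L M (\<lambda>\<omega>. Y x i \<omega> * Y x j \<omega>) = 0"
proof -
  have one: "(1::real) \<in> {0..1}" by simp
  have e: "Y x i \<omega> * Y x j \<omega> = indicator (Bset x i \<inter> Bset x j) \<omega>
     - G x * indicator (Bset x i \<inter> Aset j) \<omega> - G x * indicator (Aset i \<inter> Bset x j) \<omega>
     + (G x * G x) * indicator (Aset i \<inter> Aset j) \<omega>" for \<omega>
    unfolding Y_def indicator_inter_arith by (simp add: algebra_simps)
  have sets: "Bset x i \<inter> Bset x j \<in> sets M" "Bset x i \<inter> Aset j \<in> sets M"
    "Aset i \<inter> Bset x j \<in> sets M" "Aset i \<inter> Aset j \<in> sets M"
    using Bset_sets Aset_sets ij by auto
  have "integral\<^sup>L M (\<lambda>\<omega>. Y x i \<omega> * Y x j \<omega>) =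
     measure M (Bset x i \<inter> Bset x j) - G x * measure M (Bset x i \<inter> Aset j)
     - G x * measure M (Aset i \<inter> Bset x j) + (G x * G x) * measure M (Aset i \<inter> Aset j)"
  proof -
    have I: "\<And>A. A \<in> sets M \<Longrightarrow> integrable M (indicat_real A)"
      by (intro integrable_real_indicator) (auto simp: emeasure_eq_measure)
    note ints = I[OF sets(1)] integrable_mult_right[OF I[OF sets(2)]]
      integrable_mult_right[OF I[OF sets(3)]] integrable_mult_right[OF I[OF sets(4)]]
    have "integral\<^sup>L M (\<lambda>\<omega>. Y x i \<omega> * Y x j \<omega>) =
      integral\<^sup>L M (\<lambda>\<omega>. indicator (Bset x i \<inter> Bset x j) \<omega>
     - G x * indicator (Bset x i \<inter> Aset j) \<omega> - G x * indicator (Aset i \<inter> Bset x j) \<omega>)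
     + integral\<^sup>L M (\<lambda>\<omega>. (G x * G x) * indicator (Aset i \<inter> Aset j) \<omega>)"
      unfolding e by (rule Bochner_Integration.integral_add) (auto intro!: Bochner_Integration.integrable_diff ints I sets)
    also have "integral\<^sup>L M (\<lambda>\<omega>. indicator (Bset x i \<inter> Bset x j) \<omega>
     - G x * indicator (Bset x i \<inter> Aset j) \<omega> - G x * indicator (Aset i \<inter> Bset x j) \<omega>)
      = integral\<^sup>L M (\<lambda>\<omega>. indicator (Bset x i \<inter> Bset x j) \<omega>
     - G x * indicator (Bset x i \<inter> Aset j) \<omega>) - integral\<^sup>L M (\<lambda>\<omega>. G x * indicator (Aset i \<inter> Bset x j) \<omega>)"
      by (rule Bochner_Integration.integral_diff) (auto intro!: Bochner_Integration.integrable_diff ints I sets)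
    also have "integral\<^sup>L M (\<lambda>\<omega>. indicator (Bset x i \<inter> Bset x j) \<omega>
     - G x * indicator (Bset x i \<inter> Aset j) \<omega>) = integral\<^sup>L M (indicator (Bset x i \<inter> Bset x j))
      - integral\<^sup>L M (\<lambda>\<omega>. G x * indicator (Bset x i \<inter> Aset j) \<omega>)"
      by (rule Bochner_Integration.integral_diff) (auto intro!: Bochner_Integration.integrable_diff ints I sets)
    finally show ?thesis using sets by (simp add: Int_absorb2 sets.sets_into_space)
  qed
  also have "\<dots> = 0"
    using meas_pair[OF ij x x] meas_pair[OF ij x one] meas_pair[OF ij one x] Bset_one ij G1
    by (simp add: algebra_simps)
  finally show ?thesis .
qed

lemma D_meas: "D x m \<in> borel_measurable M"
  unfolding D_def[abs_def] by (intro borel_measurable_sum Y_meas) auto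

lemma D2_expand: "(D x m \<omega>)\<^sup>2 = (\<Sum>i\<in>{1..m}. \<Sum>j\<in>{1..m}. Y x i \<omega> * Y x j \<omega>)"
  unfolding D_def power2_eq_square sum_product ..

lemma D2_int: assumes "x \<in> {0..1}" shows "integrable M (\<lambda>\<omega>. (D x m \<omega>)\<^sup>2)"
  unfolding D2_expand using assms by (intro Bochner_Integration.integrable_sum YY_int) auto

lemma ED2: assumes x: "x \<in> {0..1}" shows "integral\<^sup>L M (\<lambda>\<omega>. (D x m \<omega>)\<^sup>2) \<le> real m"
proof -
  have "integral\<^sup>L M (\<lambda>\<omega>. (D x m \<omega>)\<^sup>2) =
     (\<Sum>i\<in>{1..m}. \<Sum>j\<in>{1..m}. integral\<^sup>L M (\<lambda>\<omega>. Y x i \<omega> * Y x j \<omega>))"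
  proof -
    have "integral\<^sup>L M (\<lambda>\<omega>. (D x m \<omega>)\<^sup>2) = (\<Sum>i\<in>{1..m}. integral\<^sup>L M (\<lambda>\<omega>. \<Sum>j\<in>{1..m}. Y x i \<omega> * Y x j \<omega>))"
      unfolding D2_expand using x
      by (intro Bochner_Integration.integral_sum Bochner_Integration.integrable_sum YY_int) auto
    also have "\<dots> = (\<Sum>i\<in>{1..m}. \<Sum>j\<in>{1..m}. integral\<^sup>L M (\<lambda>\<omega>. Y x i \<omega> * Y x j \<omega>))"
      using x by (intro sum.cong refl Bochner_Integration.integral_sum YY_int) auto
    finally show ?thesis .
  qed
  also have "\<dots> = (\<Sum>i\<in>{1..m}. integral\<^sup>L M (\<lambda>\<omega>. Y x i \<omega> * Y x i \<omega>))"
  proof (rule sum.cong[OF refl])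
    fix i assume i: "i \<in> {1..m}"
    have "(\<Sum>j\<in>{1..m}. integral\<^sup>L M (\<lambda>\<omega>. Y x i \<omega> * Y x j \<omega>)) =
       (\<Sum>j\<in>{1..m}. if j = i then integral\<^sup>L M (\<lambda>\<omega>. Y x i \<omega> * Y x i \<omega>) else 0)"
      using i x by (intro sum.cong refl) (auto intro: EYY_off)
    also have "\<dots> = integral\<^sup>L M (\<lambda>\<omega>. Y x i \<omega> * Y x i \<omega>)" using i by simp
    finally show "(\<Sum>j\<in>{1..m}. integral\<^sup>L M (\<lambda>\<omega>. Y x i \<omega> * Y x j \<omega>)) =
       integral\<^sup>L M (\<lambda>\<omega>. Y x i \<omega> * Y x i \<omega>)" .
  qed
  also have "\<dots> \<le> (\<Sum>i\<in>{1..m}. 1)" using x by (intro sum_mono EYY_diag) auto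
  finally show ?thesis by simp
qed

lemma conc: assumes x: "x \<in> {0..1}" and eta: "0 < \<eta>" and m: "1 \<le> m"
  shows "measure M {\<omega>\<in>space M. \<eta> * real m \<le> \<bar>D x m \<omega>\<bar>} \<le> 1 / (\<eta>\<^sup>2 * real m)"
proof -
  have a: "0 < \<eta> * real m" using eta m by simp
  have "measure M {\<omega>\<in>space M. \<bar>D x m \<omega>\<bar> \<ge> \<eta> * real m} \<le>
      integral\<^sup>L M (\<lambda>\<omega>. (D x m \<omega>)\<^sup>2) / (\<eta> * real m)\<^sup>2"
    by (rule second_moment_method[OF D_meas D2_int[OF x] a])
  also have "\<dots> \<le> real m / (\<eta> * real m)\<^sup>2"
    using ED2[OF x] by (intro divide_right_mono) auto
  also have "\<dots> = 1 / (\<eta>\<^sup>2 * real m)" using m by (simp add: power2_eq_square)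
  finally show ?thesis .
qed

lemma conc_sets: "{\<omega>\<in>space M. \<eta> * real m \<le> \<bar>D x m \<omega>\<bar>} \<in> sets M"
proof -
  have [measurable]: "D x m \<in> borel_measurable M" by (rule D_meas)
  show ?thesis by measurable
qed

lemma sum_ind_card: assumes "\<omega> \<in> space M"
  shows "(\<Sum>i\<in>{1..m}. indicator (Bset x i) \<omega>) = real (card {i\<in>S \<omega> \<inter> {1..m}. p i \<omega> \<le> x})"
    and "(\<Sum>i\<in>{1..m}. indicator (Aset i) \<omega>) = real (card (S \<omega> \<inter> {1..m}))"
proof -
  have "(\<Sum>i\<in>{1..m}. indicator (Bset x i) \<omega>) = (\<Sum>i\<in>{1..m}. (indicator {i. i \<in> S \<omega> \<and> p i \<omega> \<le> x} i :: real))"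
    using assms by (intro sum.cong refl) (auto simp: indicator_def Bset_def)
  also have "\<dots> = real (card ({1..m} \<inter> {i. i \<in> S \<omega> \<and> p i \<omega> \<le> x}))"
    by (rule sum_ind_real) simp
  also have "{1..m} \<inter> {i. i \<in> S \<omega> \<and> p i \<omega> \<le> x} = {i\<in>S \<omega> \<inter> {1..m}. p i \<omega> \<le> x}" by auto
  finally show "(\<Sum>i\<in>{1..m}. indicator (Bset x i) \<omega>) = real (card {i\<in>S \<omega> \<inter> {1..m}. p i \<omega> \<le> x})" .
  have "(\<Sum>i\<in>{1..m}. indicator (Aset i) \<omega>) = (\<Sum>i\<in>{1..m}. (indicator (S \<omega>) i :: real))"
    using assms by (intro sum.cong refl) (auto simp: indicator_def Aset_def)
  also have "\<dots> = real (card ({1..m} \<inter> S \<omega>))"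
    by (rule sum_ind_real) simp
  finally show "(\<Sum>i\<in>{1..m}. indicator (Aset i) \<omega>) = real (card (S \<omega> \<inter> {1..m}))"
    by (simp add: Int_commute)
qed

lemma D_eq: assumes "\<omega> \<in> space M"
  shows "D x m \<omega> = real (card {i\<in>S \<omega> \<inter> {1..m}. p i \<omega> \<le> x}) - G x * real (card (S \<omega> \<inter> {1..m}))"
  unfolding D_def Y_def sum_subtractf sum_distrib_left[symmetric] sum_ind_card[OF assms] ..

lemma K_meas: "(\<lambda>\<omega>. real (card (S \<omega> \<inter> {1..m}))) \<in> borel_measurable M"
proof -
  have "(\<lambda>\<omega>. (\<Sum>i\<in>{1..m}. indicator (Aset i) \<omega>) :: real) \<in> borel_measurable M"
    by (intro borel_measurable_sum borel_measurable_indicator Aset_sets)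
  moreover have "\<And>\<omega>. \<omega> \<in> space M \<Longrightarrow> (\<Sum>i\<in>{1..m}. indicator (Aset i) \<omega>) = real (card (S \<omega> \<inter> {1..m}))"
    by (rule sum_ind_card(2))
  ultimately show ?thesis using measurable_cong by (metis (no_types, lifting))
qed

end


lemma card_filter_split:
  assumes "finite A"
  shows "real (card {i\<in>A. P i}) = real (card A) - real (card {i\<in>A. \<not> P i})"
proof -
  have "card A = card {i\<in>A. P i} + card {i\<in>A. \<not> P i}"
    using assms by (subst card_Un_disjoint[symmetric]) (auto intro: arg_cong[where f=card])
  thus ?thesis by simp
qed

lemma upper_det:
  assumes fin: "finite A" and Am: "A \<subseteq> {1..m}" and ka: "0 < \<kappa>" and x0: "0 \<le> x" and xk: "x \<le> \<kappa> * \<alpha>"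
    and a: "0 < \<alpha>"
    and key: "real (card {i\<in>A. pv i \<le> x}) - real (card A) + b \<ge> \<kappa> * real m"
  shows "real (t_stat \<alpha> m pv A) \<le> b"
proof (rule t_stat_le[OF fin])
  fix I assume IA: "I \<subseteq> A" and Ib: "real (card I) > b"
  have finI: "finite I" using fin IA by (rule rev_finite_subset)
  have "card {i\<in>I. \<not> pv i \<le> x} \<le> card {i\<in>A. \<not> pv i \<le> x}"
    using IA fin by (intro card_mono) auto
  moreover have "real (card {i\<in>A. pv i \<le> x}) = real (card A) - real (card {i\<in>A. \<not> pv i \<le> x})"
    using fin by (rule card_filter_split)
  moreover have "real (card {i\<in>I. pv i \<le> x}) = real (card I) - real (card {i\<in>I. \<not> pv i \<le> x})"
    using finI by (rule card_filter_split)
  ultimately have cI: "real (card {i\<in>I. pv i \<le> x}) > \<kappa> * real m" using key Ib by linarith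
  show "closed_rej \<alpha> m pv I" unfolding closed_rej_def
  proof (intro conjI allI impI)
    show "I \<subseteq> {1..m}" using IA Am by auto
    fix J assume J: "I \<subseteq> J \<and> J \<subseteq> {1..m}"
    have finJ: "finite J" using J by (meson finite_atLeastAtMost rev_finite_subset)
    have "card {i\<in>I. pv i \<le> x} \<le> card {j\<in>J. pv j \<le> x}" using J finJ by (intro card_mono) auto
    hence cJ: "real (card {j\<in>J. pv j \<le> x}) > \<kappa> * real m" using cI by linarith
    have "card J \<le> m" using J card_mono[of "{1..m}" J] by auto
    hence "real (card J) * x \<le> real m * x" using x0 by (intro mult_right_mono) auto
    also have "\<dots> \<le> real m * (\<kappa> * \<alpha>)" using xk by (intro mult_left_mono) auto
    also have "\<dots> = (\<kappa> * real m) * \<alpha>" by simp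
    also have "\<dots> \<le> real (card {j\<in>J. pv j \<le> x}) * \<alpha>" using cJ a by (intro mult_right_mono) auto
    finally have le: "real (card J) * x \<le> real (card {j\<in>J. pv j \<le> x}) * \<alpha>" .
    have "0 \<le> \<kappa> * real m" using ka by simp
    hence "1 \<le> card {j\<in>J. pv j \<le> x}" using cJ by linarith
    thus "simes_rej \<alpha> pv J" using simes_rejI[OF finJ _ le] by simp
  qed
qed

lemma lower_det:
  assumes fin: "finite A" and Am: "A \<subseteq> {1..m}" and a: "0 < \<alpha>" and d0: "0 \<le> \<delta>"
    and J: "J = {i\<in>A. pv i > \<delta>}"
    and key: "\<And>y. \<delta> \<le> y \<Longrightarrow> y \<le> \<alpha> \<Longrightarrow> real (card {j\<in>J. pv j \<le> y}) < y * real (card J) / \<alpha>"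
  shows "card J \<le> t_stat \<alpha> m pv A"
proof (rule t_stat_ge[OF fin])
  show "J \<subseteq> A" "J \<subseteq> {1..m}" using J Am by auto
  have finJ: "finite J" using J fin by auto
  show "\<not> simes_rej \<alpha> pv J"
  proof (cases "J = {}")
    case True thus ?thesis by (simp add: simes_rej_def)
  next
    case False
    hence cJ: "0 < real (card J)" using finJ by (simp add: card_gt_0_iff)
    show ?thesis
    proof (rule simes_not_rejI[OF finJ a])
      fix y assume y: "0 < y" "y \<le> \<alpha>"
      show "real (card {j\<in>J. pv j \<le> y}) < y * real (card J) / \<alpha>"
      proof (cases "\<delta> \<le> y")
        case True thus ?thesis using key y by auto
      next
        case False
        hence "{j\<in>J. pv j \<le> y} = {}" using J by auto
        hence "real (card {j\<in>J. pv j \<le> y}) = 0" by (simp only: card.empty of_nat_0)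
        moreover have "0 < y * real (card J) / \<alpha>" using y cJ a by simp
        ultimately show ?thesis by linarith
      qed
    qed
  qed
qed



locale mainloc = prob_space M for M :: "'a measure" +
  fixes p :: "nat \<Rightarrow> nat \<Rightarrow> 'a \<Rightarrow> real" and S :: "'a \<Rightarrow> nat set"
    and \<gamma>S \<alpha> c :: real and PS1 :: "nat \<Rightarrow> real \<Rightarrow> real"
  assumes alpha: "0 < \<alpha>" "\<alpha> < 1"
    and gS: "0 \<le> \<gamma>S" "\<gamma>S \<le> 1"
    and PS1_df: "\<And>n. dist_fun_01 (PS1 n)" "\<And>n x. x \<in> {0..1} \<Longrightarrow> PS1 n x \<ge> x"
    and p_rv: "\<And>i n. 1 \<le> i \<Longrightarrow> p i n \<in> borel_measurable M"
    and p_range: "\<And>i n \<omega>. 1 \<le> i \<Longrightarrow> \<omega> \<in> space M \<Longrightarrow> p i n \<omega> \<in> {0..1}"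
    and S_meas: "\<And>i. {\<omega> \<in> space M. i \<in> S \<omega>} \<in> sets M"
    and p_condS: "\<And>n I x. finite I \<Longrightarrow> I \<subseteq> {1..} \<Longrightarrow> (\<forall>i\<in>I. x i \<in> {0..1}) \<Longrightarrow>
        measure M {\<omega> \<in> space M. I \<subseteq> S \<omega> \<and> (\<forall>i\<in>I. p i n \<omega> \<le> x i)}
        = measure M {\<omega> \<in> space M. I \<subseteq> S \<omega>} * (\<Prod>i\<in>I. \<gamma>S * x i + (1 - \<gamma>S) * PS1 n (x i))"
    and lim_PS1: "\<And>x. x \<in> {0<..1} \<Longrightarrow> (\<lambda>n. PS1 n x) \<longlonglongrightarrow> 1"
    and c_pos: "0 < c"
    and S_ratio: "\<And>\<epsilon>. 0 < \<epsilon> \<Longrightarrow>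
        (\<lambda>m. measure M {\<omega> \<in> space M.
            \<bar>real (card (S \<omega> \<inter> {1..m})) / real m - c\<bar> > \<epsilon>}) \<longlonglongrightarrow> 0"
begin

definition "G n x = \<gamma>S * x + (1 - \<gamma>S) * PS1 n x"
definition "K m \<omega> = real (card (S \<omega> \<inter> {1..m}))"
definition "Nc n m x \<omega> = real (card {i\<in>S \<omega> \<inter> {1..m}. p i n \<omega> \<le> x})"
definition "E1 m = {\<omega>\<in>space M. \<bar>K m \<omega> / real m - c\<bar> > c/2}"
definition "Ec n m x \<eta> = {\<omega>\<in>space M. \<eta> * real m \<le> \<bar>Nc n m x \<omega> - G n x * K m \<omega>\<bar>}"

lemma PS1_mono: "x \<in> {0..1} \<Longrightarrow> y \<in> {0..1} \<Longrightarrow> x \<le> y \<Longrightarrow> PS1 n x \<le> PS1 n y"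
  using PS1_df(1)[of n] unfolding dist_fun_01_def by (meson mono_onD)

lemma PS1_1: "PS1 n 1 = 1" using PS1_df(1)[of n] unfolding dist_fun_01_def by simp

lemma PS1_le1: "x \<in> {0..1} \<Longrightarrow> PS1 n x \<le> 1"
  using PS1_mono[of x 1 n] PS1_1 by auto

lemma G01: "x \<in> {0..1} \<Longrightarrow> 0 \<le> G n x \<and> G n x \<le> 1"
proof -
  assume x: "x \<in> {0..1}"
  have a: "x \<le> PS1 n x" "PS1 n x \<le> 1" using PS1_df(2)[OF x] PS1_le1[OF x] by auto
  have "0 \<le> \<gamma>S * x" "0 \<le> (1 - \<gamma>S) * PS1 n x" using gS x a by auto
  moreover have "\<gamma>S * x \<le> \<gamma>S" "(1 - \<gamma>S) * PS1 n x \<le> 1 - \<gamma>S"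
    using gS x a by (auto intro: mult_left_le mult_le_one)
  ultimately show ?thesis unfolding G_def by linarith
qed

lemma cxn: "cx M (\<lambda>i. p i n) S (G n)"
proof unfold_locales
  show "\<And>i. 1 \<le> i \<Longrightarrow> p i n \<in> borel_measurable M" by (rule p_rv)
  show "\<And>i \<omega>. 1 \<le> i \<Longrightarrow> \<omega> \<in> space M \<Longrightarrow> p i n \<omega> \<in> {0..1}" by (rule p_range)
  show "\<And>i. {\<omega> \<in> space M. i \<in> S \<omega>} \<in> sets M" by (rule S_meas)
  show "\<And>I x. finite I \<Longrightarrow> I \<subseteq> {1..} \<Longrightarrow> \<forall>i\<in>I. x i \<in> {0..1} \<Longrightarrow>
        measure M {\<omega> \<in> space M. I \<subseteq> S \<omega> \<and> (\<forall>i\<in>I. p i n \<omega> \<le> x i)}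
        = measure M {\<omega> \<in> space M. I \<subseteq> S \<omega>} * (\<Prod>i\<in>I. G n (x i))"
    unfolding G_def by (rule p_condS)
  show "\<And>x. x \<in> {0..1} \<Longrightarrow> 0 \<le> G n x \<and> G n x \<le> 1" by (rule G01)
  show "G n 1 = 1" using PS1_1 by (simp add: G_def algebra_simps)
qed

lemma Ec_sets_bound:
  assumes x: "x \<in> {0..1}" and eta: "0 < \<eta>" and m: "1 \<le> m"
  shows "Ec n m x \<eta> \<in> sets M" "measure M (Ec n m x \<eta>) \<le> 1 / (\<eta>\<^sup>2 * real m)"
proof -
  interpret C: cx M "\<lambda>i. p i n" S "G n" by (rule cxn)
  have e: "Ec n m x \<eta> = {\<omega>\<in>space M. \<eta> * real m \<le> \<bar>C.D x m \<omega>\<bar>}"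
    unfolding Ec_def Nc_def K_def by (auto simp: C.D_eq)
  show "Ec n m x \<eta> \<in> sets M" unfolding e by (rule C.conc_sets)
  show "measure M (Ec n m x \<eta>) \<le> 1 / (\<eta>\<^sup>2 * real m)" unfolding e by (rule C.conc[OF x eta m])
qed

lemma E1_sets: "E1 m \<in> sets M"
proof -
  interpret C: cx M "\<lambda>i. p i 0" S "G 0" by (rule cxn)
  have [measurable]: "(\<lambda>\<omega>. real (card (S \<omega> \<inter> {1..m}))) \<in> borel_measurable M" by (rule C.K_meas)
  show ?thesis unfolding E1_def K_def by measurable
qed

lemma E1_lim: "(\<lambda>m. measure M (E1 m)) \<longlonglongrightarrow> 0"
  using S_ratio[of "c/2"] c_pos unfolding E1_def K_def by simp

lemma K_le: "K m \<omega> \<le> real m"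
proof -
  have "card (S \<omega> \<inter> {1..m}) \<le> card {1..m}" by (intro card_mono) auto
  thus ?thesis by (simp add: K_def)
qed

lemma K_ge: assumes "\<omega> \<in> space M" "\<omega> \<notin> E1 m" "1 \<le> m" shows "c * real m / 2 \<le> K m \<omega>"
proof -
  have "\<bar>K m \<omega> / real m - c\<bar> \<le> c/2" using assms by (auto simp: E1_def)
  hence "c / 2 \<le> K m \<omega> / real m" by linarith
  thus ?thesis using assms(3) by (simp add: field_simps)
qed

definition "qv n m \<omega> = q_stat \<alpha> m (\<lambda>i. p i n \<omega>) (S \<omega> \<inter> {1..m})"

lemma A_props: assumes "\<omega> \<in> space M" "\<omega> \<notin> E1 m" "1 \<le> m"
  shows "finite (S \<omega> \<inter> {1..m})" "S \<omega> \<inter> {1..m} \<noteq> {}" "0 < K m \<omega>"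
    "qv n m \<omega> = real (t_stat \<alpha> m (\<lambda>i. p i n \<omega>) (S \<omega> \<inter> {1..m})) / K m \<omega>"
proof -
  show f: "finite (S \<omega> \<inter> {1..m})" by simp
  have "0 < c * real m / 2" using c_pos assms(3) by simp
  thus K: "0 < K m \<omega>" using K_ge[OF assms] by linarith
  thus "S \<omega> \<inter> {1..m} \<noteq> {}" by (auto simp: K_def)
  thus "qv n m \<omega> = real (t_stat \<alpha> m (\<lambda>i. p i n \<omega>) (S \<omega> \<inter> {1..m})) / K m \<omega>"
    by (simp add: qv_def q_stat_def K_def)
qed

lemma upper:
  assumes eps: "0 < \<epsilon>"
  shows "\<exists>x \<eta> n0. x \<in> {0..1} \<and> 0 < \<eta> \<and> (\<forall>n\<ge>n0. \<forall>m\<ge>1. \<forall>\<omega>\<in>space M.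
     \<omega> \<notin> E1 m \<longrightarrow> \<omega> \<notin> Ec n m x \<eta> \<longrightarrow> qv n m \<omega> \<le> \<gamma>S + \<epsilon>)"
proof -
  define \<kappa> where "\<kappa> = \<epsilon> * c / 4"
  define x where "x = min 1 (\<kappa> * \<alpha>)"
  define \<eta> where "\<eta> = \<epsilon> * c / 8"
  have ka: "0 < \<kappa>" using eps c_pos by (simp add: \<kappa>_def)
  have x: "x \<in> {0<..1}" using ka alpha by (simp add: x_def)
  have eta: "0 < \<eta>" using eps c_pos by (simp add: \<eta>_def)
  have "\<forall>\<^sub>F n in sequentially. dist (PS1 n x) 1 < \<eta>" using lim_PS1[OF x] eta by (rule tendstoD)
  then obtain n0 where n0: "\<And>n. n \<ge> n0 \<Longrightarrow> dist (PS1 n x) 1 < \<eta>"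
    by (auto simp: eventually_sequentially)
  have x01: "x \<in> {0..1}" using x by auto
  show ?thesis
  proof (intro exI conjI allI impI ballI)
    show "x \<in> {0..1}" "0 < \<eta>" by (fact x01, fact eta)
    fix n m \<omega> assume n: "n0 \<le> n" and m: "1 \<le> m" and w: "\<omega> \<in> space M"
      and nE1: "\<omega> \<notin> E1 m" and nEc: "\<omega> \<notin> Ec n m x \<eta>"
    note AP = A_props[OF w nE1 m]
    let ?A = "S \<omega> \<inter> {1..m}"
    let ?K = "K m \<omega>"
    have Kge: "c * real m / 2 \<le> ?K" by (rule K_ge[OF w nE1 m])
    have Kle: "?K \<le> real m" by (rule K_le)
    have Kpos: "0 < ?K" by (rule AP(3))
    have ps: "1 - \<eta> < PS1 n x" using n0[OF n] PS1_le1[OF x01] by (auto simp: dist_real_def)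
    have Gx: "G n x \<ge> 1 - \<gamma>S - \<eta>"
    proof -
      have "(1 - \<gamma>S) * (1 - \<eta>) \<le> (1 - \<gamma>S) * PS1 n x" using ps gS by (intro mult_left_mono) auto
      moreover have "0 \<le> \<gamma>S * x" using gS x by auto
      moreover have "(1 - \<gamma>S) * (1 - \<eta>) \<ge> 1 - \<gamma>S - \<eta>" using gS eta
        by (simp add: algebra_simps)
      ultimately show ?thesis unfolding G_def by linarith
    qed
    have Nc: "Nc n m x \<omega> > G n x * ?K - \<eta> * real m" using nEc w by (auto simp: Ec_def)
    have "G n x * ?K \<ge> (1 - \<gamma>S - \<eta>) * ?K" using Gx Kpos by (intro mult_right_mono) auto
    have etaK: "\<eta> * ?K \<le> \<eta> * real m" using Kle eta by (intro mult_left_mono) auto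
    have epsK: "\<epsilon> * (c * real m / 2) \<le> \<epsilon> * ?K" using Kge eps by (intro mult_left_mono) auto
    have key: "real (card {i\<in>?A. p i n \<omega> \<le> x}) - real (card ?A) + (\<gamma>S + \<epsilon>) * ?K \<ge> \<kappa> * real m"
    proof -
      have "real (card {i\<in>?A. p i n \<omega> \<le> x}) = Nc n m x \<omega>" by (simp add: Nc_def)
      moreover have "real (card ?A) = ?K" by (simp add: K_def)
      ultimately show ?thesis
        using Nc \<open>G n x * ?K \<ge> (1 - \<gamma>S - \<eta>) * ?K\<close> etaK epsK
        unfolding \<kappa>_def \<eta>_def by (simp add: algebra_simps)
    qed
    have t: "real (t_stat \<alpha> m (\<lambda>i. p i n \<omega>) ?A) \<le> (\<gamma>S + \<epsilon>) * ?K"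
      by (rule upper_det[OF AP(1) _ ka _ _ alpha(1) key]) (use x in \<open>auto simp: x_def\<close>)
    show "qv n m \<omega> \<le> \<gamma>S + \<epsilon>" using t Kpos AP(4) by (simp add: divide_le_eq)
  qed
qed

lemma q_nonneg: "0 \<le> qv n m \<omega>"
  by (simp add: qv_def q_stat_def)

lemma grid_exists:
  assumes d: "0 < \<delta>" "\<delta> \<le> 1 - \<alpha>" and y: "\<delta> \<le> y" "y \<le> \<alpha>"
  shows "\<exists>k\<in>{0..nat \<lceil>2 / \<delta>\<rceil>}. y \<le> \<delta> + real k * (\<delta>/2) \<and> \<delta> + real k * (\<delta>/2) \<le> y + \<delta>/2"
proof -
  define k where "k = nat \<lceil>(y - \<delta>) / (\<delta>/2)\<rceil>"
  have r: "0 \<le> (y - \<delta>) / (\<delta>/2)" using d y by simp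
  have k1: "real k \<ge> (y - \<delta>) / (\<delta>/2)" unfolding k_def using r by linarith
  have k2: "real k < (y - \<delta>) / (\<delta>/2) + 1" unfolding k_def using r by linarith
  have "y - \<delta> \<le> real k * (\<delta>/2)" using k1 d by (simp add: field_simps)
  moreover have "real k * (\<delta>/2) < y - \<delta> + \<delta>/2" using k2 d by (simp add: field_simps)
  moreover have "k \<le> nat \<lceil>2 / \<delta>\<rceil>"
  proof -
    have "y - \<delta> \<le> 1" using y alpha d by simp
    hence "(y - \<delta>) / (\<delta>/2) \<le> 1 / (\<delta>/2)" using d by (intro divide_right_mono) auto
    hence "(y - \<delta>) / (\<delta>/2) \<le> 2 / \<delta>" by simp
    thus ?thesis unfolding k_def by (intro nat_mono ceiling_mono)
  qed
  ultimately show ?thesis by (intro bexI[of _ k]) auto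
qed

lemma lower:
  assumes eps: "0 < \<epsilon>"
  shows "\<exists>Gr \<eta> n0. finite Gr \<and> Gr \<subseteq> {0..1} \<and> 0 < \<eta> \<and> (\<forall>n\<ge>n0. \<forall>m\<ge>1. \<forall>\<omega>\<in>space M.
     \<omega> \<notin> E1 m \<longrightarrow> (\<forall>g\<in>Gr. \<omega> \<notin> Ec n m g \<eta>) \<longrightarrow> \<gamma>S - \<epsilon> \<le> qv n m \<omega>)"
proof (cases "\<gamma>S = 0")
  case True
  show ?thesis
    by (rule exI[of _ "{}"], rule exI[of _ 1], rule exI[of _ 0]) (use True eps in \<open>auto intro!: order_trans[OF _ q_nonneg]\<close>)
next
  case False
  hence gpos: "0 < \<gamma>S" using gS by simp
  define \<delta> where "\<delta> = min (1 - \<alpha>) (\<epsilon> / 2)"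
  have d: "0 < \<delta>" "\<delta> \<le> 1 - \<alpha>" "\<delta> \<le> \<epsilon> / 2" using alpha eps unfolding \<delta>_def by linarith+
  have d01: "\<delta> \<in> {0<..1}" using d alpha by auto
  define L where "L = nat \<lceil>2 / \<delta>\<rceil>"
  define Gr where "Gr = {g \<in> (\<lambda>k. \<delta> + real k * (\<delta>/2)) ` {0..L}. g \<le> 1}"
  define \<theta> where "\<theta> = \<gamma>S * \<delta> / 8"
  define \<eta> where "\<eta> = \<gamma>S * \<delta> * c / 48"
  have th: "0 < \<theta>" using gpos d by (simp add: \<theta>_def)
  have eta: "0 < \<eta>" using gpos d c_pos by (simp add: \<eta>_def)
  have "\<forall>\<^sub>F n in sequentially. dist (PS1 n \<delta>) 1 < \<theta>" using lim_PS1[OF d01] th by (rule tendstoD)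
  then obtain n0 where n0: "\<And>n. n \<ge> n0 \<Longrightarrow> dist (PS1 n \<delta>) 1 < \<theta>"
    by (auto simp: eventually_sequentially)
  have GrF: "finite Gr" "Gr \<subseteq> {0..1}" using d by (auto simp: Gr_def)
  have dGr: "\<delta> \<in> Gr" using d01 by (auto simp: Gr_def intro!: image_eqI[of _ _ 0])
  show ?thesis
  proof (intro exI conjI allI impI ballI)
    show "finite Gr" "Gr \<subseteq> {0..1}" "0 < \<eta>" by (fact GrF(1), fact GrF(2), fact eta)
    fix n m \<omega> assume n: "n0 \<le> n" and m: "1 \<le> m" and w: "\<omega> \<in> space M"
      and nE1: "\<omega> \<notin> E1 m" and nEc: "\<forall>g\<in>Gr. \<omega> \<notin> Ec n m g \<eta>"
    note AP = A_props[OF w nE1 m]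
    let ?A = "S \<omega> \<inter> {1..m}"
    let ?K = "K m \<omega>"
    let ?pv = "\<lambda>i. p i n \<omega>"
    define J where "J = {i\<in>?A. ?pv i > \<delta>}"
    have Kge: "c * real m / 2 \<le> ?K" by (rule K_ge[OF w nE1 m])
    have Kle: "?K \<le> real m" by (rule K_le)
    have Kpos: "0 < ?K" by (rule AP(3))
    have ps: "1 - \<theta> < PS1 n \<delta>" using n0[OF n] by (auto simp: dist_real_def)
    have NcG: "\<And>g. g \<in> Gr \<Longrightarrow> \<bar>Nc n m g \<omega> - G n g * ?K\<bar> < \<eta> * real m"
      using nEc w by (auto simp: Ec_def not_le)
    have cardJ: "real (card J) = ?K - Nc n m \<delta> \<omega>"
      using card_filter_split[OF AP(1), of "\<lambda>i. ?pv i \<le> \<delta>"]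
      by (simp add: J_def Nc_def K_def not_le)
    have Gd: "G n \<delta> \<le> \<gamma>S * \<delta> + (1 - \<gamma>S)"
      using PS1_le1[of \<delta> n] d01 gS unfolding G_def by (auto intro: mult_left_le)
    have "\<gamma>S * (1 - \<delta>) * ?K \<le> (1 - G n \<delta>) * ?K" using Gd Kpos by (intro mult_right_mono) (simp_all add: algebra_simps)
    have cJ: "real (card J) > \<gamma>S * (1 - \<delta>) * ?K - \<eta> * real m"
      using NcG[OF dGr] cardJ \<open>\<gamma>S * (1 - \<delta>) * ?K \<le> (1 - G n \<delta>) * ?K\<close> by (simp add: algebra_simps)
    have mK: "c * real m \<le> 2 * ?K" using Kge by simp
    have etam: "3 * \<eta> * real m \<le> \<gamma>S * \<delta> * ?K / 8"
    proof -
      have "3 * \<eta> * real m = \<gamma>S * \<delta> * (c * real m) / 16" by (simp add: \<eta>_def)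
      also have "\<dots> \<le> \<gamma>S * \<delta> * (2 * ?K) / 16" using mK gpos d by (intro divide_right_mono mult_left_mono) auto
      finally show ?thesis by (simp add: algebra_simps)
    qed
    have tJ: "card J \<le> t_stat \<alpha> m ?pv ?A"
    proof (rule lower_det[OF AP(1) _ alpha(1) _ J_def])
      show "?A \<subseteq> {1..m}" by auto
      show "0 \<le> \<delta>" using d by simp
      fix y assume y: "\<delta> \<le> y" "y \<le> \<alpha>"
      obtain k where k: "k \<in> {0..L}" "y \<le> \<delta> + real k * (\<delta>/2)" "\<delta> + real k * (\<delta>/2) \<le> y + \<delta>/2"
        using grid_exists[OF d(1) d(2) y] unfolding L_def by blast
      define g where "g = \<delta> + real k * (\<delta>/2)"
      have g1: "g \<le> 1" using k(3) y d by (simp add: g_def)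
      have gGr: "g \<in> Gr" using k g1 unfolding Gr_def g_def by auto
      have yg: "y \<le> g" "g \<le> y + \<delta>/2" "\<delta> \<le> g" using k y by (auto simp: g_def)
      have g01: "g \<in> {0..1}" using g1 yg d by auto
      have "card {j\<in>J. ?pv j \<le> y} \<le> card {j\<in>J. ?pv j \<le> g}"
        using yg AP(1) by (intro card_mono) (auto simp: J_def)
      moreover have "real (card {j\<in>J. ?pv j \<le> g}) = Nc n m g \<omega> - Nc n m \<delta> \<omega>"
      proof -
        have "{i\<in>?A. ?pv i \<le> g} = {j\<in>J. ?pv j \<le> g} \<union> {i\<in>?A. ?pv i \<le> \<delta>}"
          using yg by (auto simp: J_def)
        moreover have "{j\<in>J. ?pv j \<le> g} \<inter> {i\<in>?A. ?pv i \<le> \<delta>} = {}" by (auto simp: J_def)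
        ultimately have "card {i\<in>?A. ?pv i \<le> g} = card {j\<in>J. ?pv j \<le> g} + card {i\<in>?A. ?pv i \<le> \<delta>}"
          using AP(1) by (simp add: card_Un_disjoint J_def)
        thus ?thesis by (simp add: Nc_def)
      qed
      ultimately have c1: "real (card {j\<in>J. ?pv j \<le> y}) \<le> Nc n m g \<omega> - Nc n m \<delta> \<omega>" by linarith
      have GG: "G n g - G n \<delta> \<le> \<gamma>S * (g - \<delta>) + \<theta>"
      proof -
        have "PS1 n \<delta> \<le> PS1 n g" using PS1_mono[of \<delta> g n] d01 g01 yg by auto
        moreover have "PS1 n g \<le> 1" using PS1_le1[OF g01] .
        ultimately have "(1 - \<gamma>S) * (PS1 n g - PS1 n \<delta>) \<le> PS1 n g - PS1 n \<delta>"
          using gS by (intro mult_left_le_one_le) auto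
        thus ?thesis using ps \<open>PS1 n g \<le> 1\<close> unfolding G_def by (simp add: algebra_simps)
      qed
      have "(G n g - G n \<delta>) * ?K \<le> (\<gamma>S * (y + \<delta>/2 - \<delta>) + \<theta>) * ?K"
      proof -
        have "\<gamma>S * (g - \<delta>) \<le> \<gamma>S * (y + \<delta>/2 - \<delta>)" using yg gS by (intro mult_left_mono) auto
        thus ?thesis using GG Kpos by (intro mult_right_mono) auto
      qed
      hence c2: "real (card {j\<in>J. ?pv j \<le> y}) < (\<gamma>S * (y + \<delta>/2 - \<delta>) + \<theta>) * ?K + 2 * \<eta> * real m"
        using c1 NcG[OF gGr] NcG[OF dGr] by (simp add: algebra_simps abs_less_iff)
      have ya: "0 < y / \<alpha>" "y / \<alpha> \<le> 1" using y d alpha by auto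
      have "y / \<alpha> * (\<gamma>S * (1 - \<delta>) * ?K - \<eta> * real m) \<le> y / \<alpha> * real (card J)"
        using cJ ya by (intro mult_left_mono) auto
      moreover have "y * \<gamma>S * ?K \<le> y / \<alpha> * (\<gamma>S * (1 - \<delta>) * ?K)"
      proof -
        have "\<alpha> \<le> 1 - \<delta>" using d by simp
        hence "1 \<le> (1 - \<delta>) / \<alpha>" using alpha by simp
        hence "y * \<gamma>S * ?K * 1 \<le> y * \<gamma>S * ?K * ((1 - \<delta>) / \<alpha>)"
          using y d gS Kpos by (intro mult_left_mono) auto
        moreover have "y * \<gamma>S * ?K * ((1 - \<delta>) / \<alpha>) = y / \<alpha> * (\<gamma>S * (1 - \<delta>) * ?K)" by (simp add: field_simps)
        ultimately show ?thesis by (metis mult.right_neutral)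
      qed
      moreover have "y / \<alpha> * (\<eta> * real m) \<le> \<eta> * real m"
        using ya eta m by (intro mult_left_le_one_le) auto
      ultimately have r: "y * \<gamma>S * ?K - \<eta> * real m \<le> y * real (card J) / \<alpha>"
        by (simp add: algebra_simps)
      have eta_m_nonneg: "0 \<le> \<eta> * real m" using eta by simp
      have "(\<gamma>S * (y + \<delta>/2 - \<delta>) + \<theta>) * ?K + 2 * \<eta> * real m \<le> y * \<gamma>S * ?K - \<eta> * real m"
        using etam eta_m_nonneg unfolding \<theta>_def by (simp add: algebra_simps)
      thus "real (card {j\<in>J. ?pv j \<le> y}) < y * real (card J) / \<alpha>" using c2 r by linarith
    qed
    have "\<gamma>S - \<epsilon> \<le> real (card J) / ?K"
    proof -
      have "\<eta> * real m \<le> \<gamma>S * \<delta> * ?K / 24" using etam by simp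
      hence "\<gamma>S * (1 - \<delta>) * ?K - \<gamma>S * \<delta> * ?K / 24 < real (card J)" using cJ by linarith
      moreover have "(\<gamma>S - \<epsilon>) * ?K \<le> \<gamma>S * (1 - \<delta>) * ?K - \<gamma>S * \<delta> * ?K / 24"
      proof -
        have "\<gamma>S * \<delta> + \<gamma>S * \<delta> / 24 \<le> \<epsilon>" 
        proof -
          have "\<gamma>S * \<delta> \<le> \<delta>" using gS d by (intro mult_left_le_one_le) auto
          thus ?thesis using d gS by linarith
        qed
        hence "(\<gamma>S - \<epsilon>) * ?K \<le> (\<gamma>S - \<gamma>S * \<delta> - \<gamma>S * \<delta> / 24) * ?K"
          using Kpos by (intro mult_right_mono) auto
        thus ?thesis by (simp add: algebra_simps)
      qed
      ultimately show ?thesis using Kpos by (simp add: le_divide_eq)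
    qed
    also have "\<dots> \<le> qv n m \<omega>" unfolding AP(4) using tJ Kpos by (intro divide_right_mono) auto
    finally show "\<gamma>S - \<epsilon> \<le> qv n m \<omega>" .
  qed
qed

lemma ev_inv: assumes "0 < e" shows "\<forall>\<^sub>F m in sequentially. C / real m < e"
proof -
  have "(\<lambda>m. C / real m) \<longlonglongrightarrow> 0"
    by (intro tendsto_divide_0[OF tendsto_const] filterlim_real_at_infinity_sequentially)
  thus ?thesis using assms by (rule order_tendstoD(2))
qed

lemma main_lim:
  assumes eps: "0 < \<epsilon>"
  shows "((\<lambda>(m, n). measure M {\<omega> \<in> space M. \<bar>qv n m \<omega> - \<gamma>S\<bar> > \<epsilon>}) \<longlongrightarrow> 0)
          (sequentially \<times>\<^sub>F sequentially)"
proof (rule tendstoI)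
  fix e :: real assume e: "0 < e"
  obtain xu \<eta>u nu where U: "xu \<in> {0..1}" "0 < \<eta>u" "\<forall>n\<ge>nu. \<forall>m\<ge>1. \<forall>\<omega>\<in>space M.
     \<omega> \<notin> E1 m \<longrightarrow> \<omega> \<notin> Ec n m xu \<eta>u \<longrightarrow> qv n m \<omega> \<le> \<gamma>S + \<epsilon>"
    using upper[OF eps] by blast
  obtain Gr \<eta>l nl where Lo: "finite Gr" "Gr \<subseteq> {0..1}" "0 < \<eta>l" "\<forall>n\<ge>nl. \<forall>m\<ge>1. \<forall>\<omega>\<in>space M.
     \<omega> \<notin> E1 m \<longrightarrow> (\<forall>g\<in>Gr. \<omega> \<notin> Ec n m g \<eta>l) \<longrightarrow> \<gamma>S - \<epsilon> \<le> qv n m \<omega>"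
    using lower[OF eps] by blast
  have e3: "0 < e / 3" using e by simp
  have "\<forall>\<^sub>F m in sequentially. measure M (E1 m) < e / 3"
    using E1_lim e3 by (rule order_tendstoD(2))
  moreover have "\<forall>\<^sub>F m in sequentially. (1 / \<eta>u\<^sup>2) / real m < e / 3" by (rule ev_inv[OF e3])
  moreover have "\<forall>\<^sub>F m in sequentially. (real (card Gr) / \<eta>l\<^sup>2) / real m < e / 3" by (rule ev_inv[OF e3])
  ultimately have "\<forall>\<^sub>F m in sequentially. measure M (E1 m) < e / 3 \<and> (1 / \<eta>u\<^sup>2) / real m < e / 3
      \<and> (real (card Gr) / \<eta>l\<^sup>2) / real m < e / 3"
    by (auto elim: eventually_elim2 eventually_mono intro: eventually_conj)
  then obtain N0 where N0: "\<And>m. m \<ge> N0 \<Longrightarrow> measure M (E1 m) < e / 3 \<and> (1 / \<eta>u\<^sup>2) / real m < e / 3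
      \<and> (real (card Gr) / \<eta>l\<^sup>2) / real m < e / 3"
    by (auto simp: eventually_sequentially)
  define N where "N = max (max N0 1) (max nu nl)"
  have bound: "measure M {\<omega> \<in> space M. \<bar>qv n m \<omega> - \<gamma>S\<bar> > \<epsilon>} < e" if m: "m \<ge> N" and n: "n \<ge> N" for m n
  proof -
    have m1: "1 \<le> m" and mN0: "N0 \<le> m" and nu: "nu \<le> n" and nl: "nl \<le> n"
      using m n by (auto simp: N_def)
    let ?U = "\<Union>g\<in>Gr. Ec n m g \<eta>l"
    have sU: "?U \<in> sets M" using Lo(1,2) Ec_sets_bound(1)[OF _ Lo(3) m1] by (intro sets.finite_UN) auto
    have s1: "E1 m \<in> sets M" by (rule E1_sets)
    have s2: "Ec n m xu \<eta>u \<in> sets M" by (rule Ec_sets_bound(1)[OF U(1) U(2) m1])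
    have sub: "{\<omega> \<in> space M. \<bar>qv n m \<omega> - \<gamma>S\<bar> > \<epsilon>} \<subseteq> (E1 m \<union> Ec n m xu \<eta>u) \<union> ?U"
    proof
      fix \<omega> assume w: "\<omega> \<in> {\<omega> \<in> space M. \<bar>qv n m \<omega> - \<gamma>S\<bar> > \<epsilon>}"
      show "\<omega> \<in> (E1 m \<union> Ec n m xu \<eta>u) \<union> ?U"
      proof (rule ccontr)
        assume "\<omega> \<notin> (E1 m \<union> Ec n m xu \<eta>u) \<union> ?U"
        hence "qv n m \<omega> \<le> \<gamma>S + \<epsilon>" "\<gamma>S - \<epsilon> \<le> qv n m \<omega>" using U(3) Lo(4) nu nl m1 w by auto
        thus False using w by auto
      qed
    qed
    have "measure M {\<omega> \<in> space M. \<bar>qv n m \<omega> - \<gamma>S\<bar> > \<epsilon>} \<le> measure M ((E1 m \<union> Ec n m xu \<eta>u) \<union> ?U)"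
      using sub s1 s2 sU by (intro finite_measure_mono) auto
    also have "\<dots> \<le> measure M (E1 m \<union> Ec n m xu \<eta>u) + measure M ?U"
      using s1 s2 sU by (intro measure_subadditive) (auto simp: emeasure_finite)
    also have "\<dots> \<le> (measure M (E1 m) + measure M (Ec n m xu \<eta>u)) + measure M ?U"
      using s1 s2 by (intro add_right_mono measure_subadditive) (auto simp: emeasure_finite)
    also have "measure M ?U \<le> (\<Sum>g\<in>Gr. measure M (Ec n m g \<eta>l))"
      using Lo(1,2) Ec_sets_bound(1)[OF _ Lo(3) m1] by (intro finite_measure_subadditive_finite) auto
    also have "\<dots> \<le> (\<Sum>g\<in>Gr. 1 / (\<eta>l\<^sup>2 * real m))"
      using Lo(2) Ec_sets_bound(2)[OF _ Lo(3) m1] by (intro sum_mono) auto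
    also have "\<dots> = (real (card Gr) / \<eta>l\<^sup>2) / real m" by simp
    also have "measure M (Ec n m xu \<eta>u) \<le> (1 / \<eta>u\<^sup>2) / real m"
      using Ec_sets_bound(2)[OF U(1) U(2) m1] by simp
    finally show ?thesis using N0[OF mN0] by linarith
  qed
  have "\<forall>\<^sub>F mn in sequentially \<times>\<^sub>F sequentially.
      measure M {\<omega> \<in> space M. \<bar>qv (snd mn) (fst mn) \<omega> - \<gamma>S\<bar> > \<epsilon>} < e"
    unfolding eventually_prod_sequentially using bound by auto
  thus "\<forall>\<^sub>F mn in sequentially \<times>\<^sub>F sequentially.
      dist ((\<lambda>(m, n). measure M {\<omega> \<in> space M. \<bar>qv n m \<omega> - \<gamma>S\<bar> > \<epsilon>}) mn) 0 < e"
    by (rule eventually_mono) (auto simp: dist_real_def)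
qed

end

theorem theorem3:
  fixes M :: "'a measure"
    and p :: "nat \<Rightarrow> nat \<Rightarrow> 'a \<Rightarrow> real"   \<comment> \<open>p i n \<omega> = p_{i,n}\<close>
    and S :: "'a \<Rightarrow> nat set"
    and \<gamma> \<gamma>S \<alpha> c :: real
    and P1 PS1 :: "nat \<Rightarrow> real \<Rightarrow> real"        \<comment> \<open>P1 n = P_{1,n}, PS1 n = P^S_{1,n}\<close>
  assumes M: "prob_space M"
    and alpha: "0 < \<alpha>" "\<alpha> < 1"
    and gamma: "0 \<le> \<gamma>" "\<gamma> \<le> 1" "0 \<le> \<gamma>S" "\<gamma>S \<le> 1"
    and P1_df: "\<And>n. dist_fun_01 (P1 n)" "\<And>n x. x \<in> {0..1} \<Longrightarrow> P1 n x \<ge> x"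
    and PS1_df: "\<And>n. dist_fun_01 (PS1 n)" "\<And>n x. x \<in> {0..1} \<Longrightarrow> PS1 n x \<ge> x"
    and p_rv: "\<And>i n. 1 \<le> i \<Longrightarrow> p i n \<in> borel_measurable M"
    and p_range: "\<And>i n \<omega>. 1 \<le> i \<Longrightarrow> \<omega> \<in> space M \<Longrightarrow> p i n \<omega> \<in> {0..1}"
    and S_meas: "\<And>i. {\<omega> \<in> space M. i \<in> S \<omega>} \<in> sets M"
    and S_inf: "\<And>\<omega>. \<omega> \<in> space M \<Longrightarrow> infinite (S \<omega>)"
    and p_indep: "\<And>n. prob_space.indep_vars M (\<lambda>_. borel) (\<lambda>i. p i n) {1..}"
    and p_marg: "\<And>i n x. 1 \<le> i \<Longrightarrow> x \<in> {0..1} \<Longrightarrow>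
        measure M {\<omega> \<in> space M. p i n \<omega> \<le> x} = \<gamma> * x + (1 - \<gamma>) * P1 n x"
    and p_condS: "\<And>n I x. finite I \<Longrightarrow> I \<subseteq> {1..} \<Longrightarrow> (\<forall>i\<in>I. x i \<in> {0..1}) \<Longrightarrow>
        measure M {\<omega> \<in> space M. I \<subseteq> S \<omega> \<and> (\<forall>i\<in>I. p i n \<omega> \<le> x i)}
        = measure M {\<omega> \<in> space M. I \<subseteq> S \<omega>} * (\<Prod>i\<in>I. \<gamma>S * x i + (1 - \<gamma>S) * PS1 n (x i))"
    and lim_PS1: "\<And>x. x \<in> {0<..1} \<Longrightarrow> (\<lambda>n. PS1 n x) \<longlonglongrightarrow> 1"
    and lim_P1: "\<And>x. x \<in> {0<..1} \<Longrightarrow> (\<lambda>n. P1 n x) \<longlonglongrightarrow> 1"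
    and mono_P1: "\<And>x. x \<in> {0..1} \<Longrightarrow> incseq (\<lambda>n. P1 n x)"
    and c_pos: "0 < c"
    and S_ratio: "\<And>\<epsilon>. 0 < \<epsilon> \<Longrightarrow>
        (\<lambda>m. measure M {\<omega> \<in> space M.
            \<bar>real (card (S \<omega> \<inter> {1..m})) / real m - c\<bar> > \<epsilon>}) \<longlonglongrightarrow> 0"
  shows "\<forall>\<epsilon>>0. ((\<lambda>(m, n). measure M {\<omega> \<in> space M.
            \<bar>q_stat \<alpha> m (\<lambda>i. p i n \<omega>) (S \<omega> \<inter> {1..m}) - \<gamma>S\<bar> > \<epsilon>}) \<longlongrightarrow> 0)
          (sequentially \<times>\<^sub>F sequentially)"
  proof -
  interpret Mn: mainloc M p S \<gamma>S \<alpha> c PS1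
  proof (rule mainloc.intro[OF M], unfold_locales)
  qed (use alpha gamma PS1_df p_rv p_range S_meas p_condS lim_PS1 c_pos S_ratio in auto)
  show ?thesis
  proof (intro allI impI)
    fix \<epsilon> :: real assume "0 < \<epsilon>"
    from Mn.main_lim[OF this] show "((\<lambda>(m, n). measure M {\<omega> \<in> space M.
            \<bar>q_stat \<alpha> m (\<lambda>i. p i n \<omega>) (S \<omega> \<inter> {1..m}) - \<gamma>S\<bar> > \<epsilon>}) \<longlongrightarrow> 0)
          (sequentially \<times>\<^sub>F sequentially)" by (simp add: Mn.qv_def)
  qed
qed

end
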